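(* Let $G$ and $H$ be connected graphs such that $G_{SR}$ and $H_{SR}$ are regular and at least one of them is bipartite. Then $$dim_s(G\square H)=\frac{|\partial(G)|\,|\partial(H)|}{2}.$$
   Context: Graphs are finite, simple, undirected; for connected $G$, $d_G$ is the shortest-path distance and $I_G[u,v]$ is the set of vertices lying on some shortest $u$–$v$ path. A vertex $w$ strongly resolves vertices $u,v$ if $v\in I_G[u,w]$ or $u\in I_G[v,w]$. A strong resolving set of $G$ is a set $S\subseteq V(G)$ such that every pair of vertices is strongly resolved by some vertex of $S$; $dim_s(G)$ is the minimum cardinality of such a set. A vertex $u$ is maximally distant from $v$ if $d_G(v,w)\le d_G(u,v)$ for every neighbor $w$ of $u$; distinct $u,v$ are mutually maximally distant if each is maximally distant from the other. The boundary $\partial(G)$ is the set of vertices mutually maximally distant with some vertex. The strong resolving graph $G_{SR}$ has vertex set $\partial(G)$, two vertices adjacent iff they are mutually maximally distant in $G$. $G\square H$ denotes the Cartesian product: vertex set $V(G)\times V(H)$, $(a,b)\sim(c,d)$ iff ($a=c$ and $bd\in E(H)$) or ($b=d$ and $ac\in E(G)$). *)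

theory Defs
  imports Complex_Main
begin

definition graph :: "'a set \<Rightarrow> ('a \<Rightarrow> 'a \<Rightarrow> bool) \<Rightarrow> bool" where
  "graph V E \<longleftrightarrow> finite V \<and> V \<noteq> {} \<and>
     (\<forall>x y. E x y \<longrightarrow> x \<in> V \<and> y \<in> V) \<and>
     (\<forall>x y. E x y \<longrightarrow> E y x) \<and> (\<forall>x. \<not> E x x)"

fun walk_len :: "('a \<Rightarrow> 'a \<Rightarrow> bool) \<Rightarrow> nat \<Rightarrow> 'a \<Rightarrow> 'a \<Rightarrow> bool" where
  "walk_len E 0 u v = (u = v)"
| "walk_len E (Suc n) u v = (\<exists>w. E u w \<and> walk_len E n w v)"

definition connected_graph :: "'a set \<Rightarrow> ('a \<Rightarrow> 'a \<Rightarrow> bool) \<Rightarrow> bool" where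
  "connected_graph V E \<longleftrightarrow> graph V E \<and> (\<forall>u\<in>V. \<forall>v\<in>V. \<exists>n. walk_len E n u v)"

definition gdist :: "('a \<Rightarrow> 'a \<Rightarrow> bool) \<Rightarrow> 'a \<Rightarrow> 'a \<Rightarrow> nat" where
  "gdist E u v = (LEAST n. walk_len E n u v)"

definition interval :: "'a set \<Rightarrow> ('a \<Rightarrow> 'a \<Rightarrow> bool) \<Rightarrow> 'a \<Rightarrow> 'a \<Rightarrow> 'a set" where
  "interval V E u v = {w \<in> V. gdist E u w + gdist E w v = gdist E u v}"

definition strongly_resolves :: "'a set \<Rightarrow> ('a \<Rightarrow> 'a \<Rightarrow> bool) \<Rightarrow> 'a \<Rightarrow> 'a \<Rightarrow> 'a \<Rightarrow> bool" where
  "strongly_resolves V E w u v \<longleftrightarrow> v \<in> interval V E u w \<or> u \<in> interval V E v w"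

definition strong_resolving_set :: "'a set \<Rightarrow> ('a \<Rightarrow> 'a \<Rightarrow> bool) \<Rightarrow> 'a set \<Rightarrow> bool" where
  "strong_resolving_set V E S \<longleftrightarrow> S \<subseteq> V \<and>
     (\<forall>u\<in>V. \<forall>v\<in>V. u \<noteq> v \<longrightarrow> (\<exists>w\<in>S. strongly_resolves V E w u v))"

definition strong_metric_dim :: "'a set \<Rightarrow> ('a \<Rightarrow> 'a \<Rightarrow> bool) \<Rightarrow> nat" where
  "strong_metric_dim V E = (LEAST k. \<exists>S. strong_resolving_set V E S \<and> card S = k)"

definition max_distant :: "('a \<Rightarrow> 'a \<Rightarrow> bool) \<Rightarrow> 'a \<Rightarrow> 'a \<Rightarrow> bool" where
  "max_distant E u v \<longleftrightarrow> (\<forall>w. E u w \<longrightarrow> gdist E v w \<le> gdist E u v)"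

definition mutually_max_distant :: "'a set \<Rightarrow> ('a \<Rightarrow> 'a \<Rightarrow> bool) \<Rightarrow> 'a \<Rightarrow> 'a \<Rightarrow> bool" where
  "mutually_max_distant V E u v \<longleftrightarrow> u \<in> V \<and> v \<in> V \<and> u \<noteq> v \<and>
     max_distant E u v \<and> max_distant E v u"

definition boundary :: "'a set \<Rightarrow> ('a \<Rightarrow> 'a \<Rightarrow> bool) \<Rightarrow> 'a set" where
  "boundary V E = {u \<in> V. \<exists>v\<in>V. mutually_max_distant V E u v}"

text \<open>The strong resolving graph G_SR: vertex set boundary V E, edge relation
  mutually_max_distant V E.\<close>

definition regular_graph :: "'a set \<Rightarrow> ('a \<Rightarrow> 'a \<Rightarrow> bool) \<Rightarrow> bool" where
  "regular_graph V E \<longleftrightarrow> (\<exists>k. \<forall>u\<in>V. card {v \<in> V. E u v} = k)"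

definition bipartite_graph :: "'a set \<Rightarrow> ('a \<Rightarrow> 'a \<Rightarrow> bool) \<Rightarrow> bool" where
  "bipartite_graph V E \<longleftrightarrow> (\<exists>A B. A \<inter> B = {} \<and> A \<union> B = V \<and>
     (\<forall>u\<in>V. \<forall>v\<in>V. E u v \<longrightarrow> (u \<in> A \<and> v \<in> B) \<or> (u \<in> B \<and> v \<in> A)))"

definition SR_regular :: "'a set \<Rightarrow> ('a \<Rightarrow> 'a \<Rightarrow> bool) \<Rightarrow> bool" where
  "SR_regular V E \<longleftrightarrow> regular_graph (boundary V E) (mutually_max_distant V E)"

definition SR_bipartite :: "'a set \<Rightarrow> ('a \<Rightarrow> 'a \<Rightarrow> bool) \<Rightarrow> bool" where
  "SR_bipartite V E \<longleftrightarrow> bipartite_graph (boundary V E) (mutually_max_distant V E)"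

definition cart_edges :: "('a \<Rightarrow> 'a \<Rightarrow> bool) \<Rightarrow> ('b \<Rightarrow> 'b \<Rightarrow> bool) \<Rightarrow> ('a \<times> 'b) \<Rightarrow> ('a \<times> 'b) \<Rightarrow> bool" where
  "cart_edges E1 E2 p q \<longleftrightarrow>
     (fst p = fst q \<and> E2 (snd p) (snd q)) \<or> (snd p = snd q \<and> E1 (fst p) (fst q))"

end

theory Submission
  imports Defs
begin


lemma walk_append: "walk_len E m u v \<Longrightarrow> walk_len E n v w \<Longrightarrow> walk_len E (m+n) u w"
  by (induction m arbitrary: u) auto

lemma walk_rev: "(\<And>x y. E x y \<Longrightarrow> E y x) \<Longrightarrow> walk_len E n u v \<Longrightarrow> walk_len E n v u"
proof (induction n arbitrary: u)
  case (Suc n)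
  then obtain w where w: "E u w" "walk_len E n w v" by auto
  then have "walk_len E n v w" using Suc by auto
  moreover have "walk_len E 1 w u" using Suc.prems(1) w(1) by auto
  ultimately show ?case using walk_append[of E n v w 1 u] by simp
qed simp

lemma gdist_le: "walk_len E n u v \<Longrightarrow> gdist E u v \<le> n"
  unfolding gdist_def by (rule Least_le)

lemma gdist_walk: "walk_len E n u v \<Longrightarrow> walk_len E (gdist E u v) u v"
  unfolding gdist_def by (rule LeastI)

lemma walk_V: "walk_len E n u v \<Longrightarrow> (\<And>x y. E x y \<Longrightarrow> x \<in> V \<and> y \<in> V) \<Longrightarrow> u \<in> V \<Longrightarrow> v \<in> V"
  by (induction n arbitrary: u) auto

locale cg =
  fixes V :: "'a set" and E :: "'a \<Rightarrow> 'a \<Rightarrow> bool"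
  assumes fin: "finite V" and ne: "V \<noteq> {}" and edgeV: "E x y \<Longrightarrow> x \<in> V \<Longrightarrow> y \<in> V"
    and esym: "E x y \<Longrightarrow> E y x" and irr: "\<not> E x x"
    and has_walk: "u \<in> V \<Longrightarrow> v \<in> V \<Longrightarrow> \<exists>n. walk_len E n u v"
begin

lemma dwalk: "u \<in> V \<Longrightarrow> v \<in> V \<Longrightarrow> walk_len E (gdist E u v) u v"
proof -
  assume "u \<in> V" "v \<in> V"
  then obtain n where "walk_len E n u v" using has_walk by blast
  then show ?thesis by (rule gdist_walk)
qed

lemma dsym: "u \<in> V \<Longrightarrow> v \<in> V \<Longrightarrow> gdist E u v = gdist E v u"
proof -
  assume a: "u \<in> V" "v \<in> V"
  have "walk_len E (gdist E u v) v u" using walk_rev[of E, OF esym dwalk[OF a]] by blast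
  then have 1: "gdist E v u \<le> gdist E u v" by (rule gdist_le)
  have "walk_len E (gdist E v u) u v" using walk_rev[of E, OF esym dwalk[OF a(2,1)]] by blast
  then have 2: "gdist E u v \<le> gdist E v u" by (rule gdist_le)
  from 1 2 show ?thesis by simp
qed

lemma tri: "u \<in> V \<Longrightarrow> v \<in> V \<Longrightarrow> w \<in> V \<Longrightarrow> gdist E u w \<le> gdist E u v + gdist E v w"
proof -
  assume a: "u \<in> V" "v \<in> V" "w \<in> V"
  show ?thesis using walk_append[OF dwalk[OF a(1,2)] dwalk[OF a(2,3)]] by (rule gdist_le)
qed

lemma d0: "u \<in> V \<Longrightarrow> v \<in> V \<Longrightarrow> gdist E u v = 0 \<longleftrightarrow> u = v"
proof
  assume "u \<in> V" "v \<in> V" "gdist E u v = 0"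
  then show "u = v" using dwalk[of u v] by simp
next
  assume "u = v" then show "gdist E u v = 0" using gdist_le[of E 0 u u] by simp
qed

lemma dedge: "E u w \<Longrightarrow> gdist E u w = 1"
proof -
  assume e: "E u w"
  have "walk_len E 1 u w" using e by simp
  then have "gdist E u w \<le> 1" by (rule gdist_le)
  moreover have "u \<noteq> w" using e irr by blast
  moreover have "walk_len E (gdist E u w) u w" using gdist_walk[OF \<open>walk_len E 1 u w\<close>] .
  ultimately show ?thesis by (cases "gdist E u w") auto
qed

lemma dstep: "u \<in> V \<Longrightarrow> v \<in> V \<Longrightarrow> gdist E u v = Suc m \<Longrightarrow> \<exists>w. E u w \<and> gdist E w v = m"
proof -
  assume uv: "u \<in> V" "v \<in> V" "gdist E u v = Suc m"
  then have "walk_len E (Suc m) u v" using dwalk by metis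
  then obtain w where w: "E u w" "walk_len E m w v" by auto
  have "gdist E w v \<le> m" using w(2) by (rule gdist_le)
  moreover have "gdist E u v \<le> gdist E u w + gdist E w v" using tri[of u w v] edgeV[OF w(1) uv(1)] uv by blast
  ultimately show ?thesis using w dedge[OF w(1)] uv by auto
qed

lemma mmd_sym: "mutually_max_distant V E x y \<longleftrightarrow> mutually_max_distant V E y x"
  unfolding mutually_max_distant_def by auto

lemma mmd_interval:
  assumes m: "mutually_max_distant V E x y" and w: "w \<in> V" and i: "y \<in> interval V E x w"
  shows "w = y"
proof (rule ccontr)
  assume ne: "w \<noteq> y"
  have xy: "x \<in> V" "y \<in> V" "max_distant E y x" using m unfolding mutually_max_distant_def by auto
  have "gdist E y w \<noteq> 0" using d0 xy w ne by auto
  then obtain m where "gdist E y w = Suc m" using not0_implies_Suc by blast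
  then obtain y' where y': "E y y'" "gdist E y' w = m" using dstep xy w by blast
  have y'V: "y' \<in> V" using edgeV[OF y'(1) xy(2)] by blast
  have "gdist E x w \<le> gdist E x y' + gdist E y' w" using tri[of x y' w] xy y'V w by blast
  moreover have "gdist E x y + gdist E y w = gdist E x w" using i unfolding interval_def by auto
  moreover have "gdist E x y' \<le> gdist E y x" using xy(3) y'(1) unfolding max_distant_def by blast
  moreover have "gdist E y x = gdist E x y" using dsym xy by auto
  ultimately show False using \<open>gdist E y w = Suc m\<close> y'(2) by linarith
qed

lemma srs_cover:
  assumes S: "strong_resolving_set V E S" and m: "mutually_max_distant V E x y"
  shows "x \<in> S \<or> y \<in> S"
proof -
  have xy: "x \<in> V" "y \<in> V" "x \<noteq> y" using m unfolding mutually_max_distant_def by auto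
  then obtain w where w: "w \<in> S" "strongly_resolves V E w x y" using S unfolding strong_resolving_set_def by blast
  have wV: "w \<in> V" using S w(1) unfolding strong_resolving_set_def by blast
  have "w = y \<or> w = x"
    using w(2) mmd_interval[OF m wV] mmd_interval[OF iffD1[OF mmd_sym m] wV]
    unfolding strongly_resolves_def by blast
  then show ?thesis using w(1) by blast
qed

end

lemma cg_of: "connected_graph V E \<Longrightarrow> cg V E"
  unfolding connected_graph_def graph_def cg_def by blast


context cg begin

lemma exists_mmd:
  assumes u: "u \<in> V" and v: "v \<in> V" and uv: "u \<noteq> v"
  shows "\<exists>x y. mutually_max_distant V E x y \<and> u \<in> interval V E v x \<and> v \<in> interval V E u y"
proof -
  let ?d = "gdist E"
  define Q where "Q = {(x,y). x \<in> V \<and> y \<in> V \<and> ?d x y = ?d x u + ?d u v + ?d v y}"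
  define f where "f = (\<lambda>p. ?d (fst p) (snd p))"
  have "Q \<subseteq> V \<times> V" unfolding Q_def by auto
  then have finQ: "finite Q" using finite_cartesian_product[OF fin fin] finite_subset by blast
  have "(u,v) \<in> Q" unfolding Q_def using u v d0 by auto
  then have ne: "f ` Q \<noteq> {}" by blast
  have "Max (f ` Q) \<in> f ` Q" using finQ ne by (intro Max_in) auto
  then obtain p where p: "p \<in> Q" "f p = Max (f ` Q)" by auto
  have pmax: "f q \<le> f p" if "q \<in> Q" for q using p(2) finQ that by simp
  obtain x y where pxy: "p = (x,y)" by (cases p)
  have xV: "x \<in> V" and yV: "y \<in> V" and eq: "?d x y = ?d x u + ?d u v + ?d v y"
    using p(1) unfolding pxy Q_def by auto
  have s1: "?d a b = ?d b a" if "a \<in> V" "b \<in> V" for a b using dsym that by blast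
  have t: "?d a c \<le> ?d a b + ?d b c" if "a \<in> V" "b \<in> V" "c \<in> V" for a b c using tri that by blast
  have "?d u v > 0" using d0 u v uv by auto
  have md1: "max_distant E x y" unfolding max_distant_def
  proof (intro allI impI, rule ccontr)
    fix x' assume e: "E x x'" and c: "\<not> ?d y x' \<le> ?d x y"
    have x'V: "x' \<in> V" using edgeV[OF e xV] by blast
    have 1: "?d x' x = 1" using dedge[OF esym[OF e]] .
    have "?d x' y \<le> ?d x' x + ?d x y" using t x'V xV yV by blast
    moreover have "?d x' u \<le> ?d x' x + ?d x u" using t x'V xV u by blast
    moreover have "?d x' y \<le> ?d x' u + ?d u y" using t x'V yV u by blast
    moreover have "?d u y \<le> ?d u v + ?d v y" using t yV v u by blast
    moreover have "?d y x' = ?d x' y" using s1 x'V yV by blast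
    ultimately have "?d x' y = ?d x' u + ?d u v + ?d v y" "?d x' y > ?d x y"
      using c eq 1 by linarith+
    then have "(x',y) \<in> Q" "f (x',y) > f p" unfolding Q_def f_def pxy using x'V yV by auto
    then show False using pmax by fastforce
  qed
  have md2: "max_distant E y x" unfolding max_distant_def
  proof (intro allI impI, rule ccontr)
    fix y' assume e: "E y y'" and c: "\<not> ?d x y' \<le> ?d y x"
    have y'V: "y' \<in> V" using edgeV[OF e yV] by blast
    have 1: "?d y y' = 1" using dedge[OF e] .
    have "?d x y' \<le> ?d x y + ?d y y'" using t y'V xV yV by blast
    moreover have "?d v y' \<le> ?d v y + ?d y y'" using t y'V yV v by blast
    moreover have "?d x y' \<le> ?d x v + ?d v y'" using t xV y'V v by blast
    moreover have "?d x v \<le> ?d x u + ?d u v" using t xV v u by blast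
    moreover have "?d y x = ?d x y" using s1 xV yV by blast
    ultimately have "?d x y' = ?d x u + ?d u v + ?d v y'" "?d x y' > ?d x y"
      using c eq 1 by linarith+
    then have "(x,y') \<in> Q" "f (x,y') > f p" unfolding Q_def f_def pxy using xV y'V by auto
    then show False using pmax by fastforce
  qed
  have "x \<noteq> y"
  proof
    assume "x = y" then have "?d x y = 0" using d0[OF xV yV] by auto
    then show False using eq \<open>?d u v > 0\<close> by linarith
  qed
  then have m: "mutually_max_distant V E x y" unfolding mutually_max_distant_def using xV yV md1 md2 by blast
  have "?d x v \<le> ?d x u + ?d u v" using t xV v u by blast
  moreover have "?d x y \<le> ?d x v + ?d v y" using t xV v yV by blast
  moreover have "?d x v = ?d v x" "?d x u = ?d u x" using s1 xV u v by blast+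
  ultimately have "?d v u + ?d u x = ?d v x" using eq s1[OF u v] by linarith
  then have i1: "u \<in> interval V E v x" unfolding interval_def using u by auto
  have "?d u y \<le> ?d u v + ?d v y" using t yV v u by blast
  moreover have "?d x y \<le> ?d x u + ?d u y" using t xV u yV by blast
  ultimately have "?d u v + ?d v y = ?d u y" using eq by linarith
  then have i2: "v \<in> interval V E u y" unfolding interval_def using v by auto
  show ?thesis using m i1 i2 by blast
qed

lemma cover_srs:
  assumes C: "C \<subseteq> V" and cov: "\<And>x y. mutually_max_distant V E x y \<Longrightarrow> x \<in> C \<or> y \<in> C"
  shows "strong_resolving_set V E C"
  unfolding strong_resolving_set_def
proof (intro conjI C ballI impI)
  fix u v assume "u \<in> V" "v \<in> V" "u \<noteq> v"
  then obtain x y where "mutually_max_distant V E x y" "u \<in> interval V E v x" "v \<in> interval V E u y"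
    using exists_mmd by blast
  then show "\<exists>w\<in>C. strongly_resolves V E w u v"
    using cov unfolding strongly_resolves_def by blast
qed

lemma two_elems: "card V \<ge> 2 \<Longrightarrow> g \<in> V \<Longrightarrow> \<exists>v\<in>V. v \<noteq> g"
proof (rule ccontr)
  assume "card V \<ge> 2" "g \<in> V" "\<not> (\<exists>v\<in>V. v \<noteq> g)"
  then have "V = {g}" by blast
  then show False using \<open>card V \<ge> 2\<close> by simp
qed

lemma no_self_md:
  assumes c: "card V \<ge> 2" and g: "g \<in> V"
  shows "\<not> max_distant E g g"
proof
  assume md: "max_distant E g g"
  obtain v where v: "v \<in> V" "v \<noteq> g" using two_elems[OF c g] by blast
  have "gdist E g v \<noteq> 0" using d0 g v by auto
  then obtain m where "gdist E g v = Suc m" using not0_implies_Suc by blast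
  then obtain w where w: "E g w" using dstep g v by blast
  have "gdist E g w \<le> gdist E g g" using md w unfolding max_distant_def by blast
  moreover have "gdist E g g = 0" using d0 g by blast
  ultimately show False using dedge[OF w] by simp
qed

lemma boundary_ne:
  assumes c: "card V \<ge> 2"
  shows "boundary V E \<noteq> {}"
proof -
  obtain g where g: "g \<in> V" using ne by blast
  obtain v where v: "v \<in> V" "v \<noteq> g" using two_elems[OF c g] by blast
  obtain x y where "mutually_max_distant V E x y" using exists_mmd[OF g v(1)] v(2) by metis
  then have "x \<in> boundary V E" unfolding boundary_def mutually_max_distant_def by blast
  then show ?thesis by blast
qed

lemma mmd_boundary: "mutually_max_distant V E x y \<Longrightarrow> x \<in> boundary V E \<and> y \<in> boundary V E"
  unfolding boundary_def using mmd_sym by (auto simp: mutually_max_distant_def)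

end


lemma lift1: "walk_len EG n g g' \<Longrightarrow> walk_len (cart_edges EG EH) n (g,h) (g',h)"
  by (induction n arbitrary: g) (auto simp: cart_edges_def)
lemma lift2: "walk_len EH n h h' \<Longrightarrow> walk_len (cart_edges EG EH) n (g,h) (g,h')"
  by (induction n arbitrary: h) (auto simp: cart_edges_def)

locale cg2 =
  fixes VG :: "'a set" and EG and VH :: "'b set" and EH
  assumes Gc: "connected_graph VG EG" and Hc: "connected_graph VH EH"
begin

sublocale G: cg VG EG by (rule cg_of[OF Gc])
sublocale H: cg VH EH by (rule cg_of[OF Hc])

lemma GedgeV: "EG x y \<Longrightarrow> x \<in> VG \<and> y \<in> VG" using Gc unfolding connected_graph_def graph_def by blast
lemma HedgeV: "EH x y \<Longrightarrow> x \<in> VH \<and> y \<in> VH" using Hc unfolding connected_graph_def graph_def by blast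

lemma P_conn: "cg (VG \<times> VH) (cart_edges EG EH)"
  unfolding cg_def
proof (intro conjI allI impI)
  show "finite (VG \<times> VH)" using G.fin H.fin by simp
  show "VG \<times> VH \<noteq> {}" using G.ne H.ne by simp
  fix x y :: "'a \<times> 'b"
  { assume "cart_edges EG EH x y" "x \<in> VG \<times> VH"
    then show "y \<in> VG \<times> VH"
      unfolding cart_edges_def using GedgeV HedgeV
      by (auto simp: mem_Times_iff) }
  { assume "cart_edges EG EH x y"
    then show "cart_edges EG EH y x"
      unfolding cart_edges_def using G.esym H.esym by auto }
  show "\<not> cart_edges EG EH x x" unfolding cart_edges_def using G.irr H.irr by auto
next
  fix u v :: "'a \<times> 'b" assume "u \<in> VG \<times> VH" "v \<in> VG \<times> VH"
  then obtain g h g' h' where uv: "u = (g,h)" "v = (g',h')" "g \<in> VG" "g' \<in> VG" "h \<in> VH" "h' \<in> VH"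
    by auto
  obtain m where m: "walk_len EG m g g'" using G.has_walk uv by blast
  obtain n where n: "walk_len EH n h h'" using H.has_walk uv by blast
  show "\<exists>n. walk_len (cart_edges EG EH) n u v"
    using walk_append[OF lift1[OF m] lift2[OF n]] uv by blast
qed

sublocale P: cg "VG \<times> VH" "cart_edges EG EH" by (rule P_conn)

lemma pdist_ge:
  "walk_len (cart_edges EG EH) n (g,h) (g',h') \<Longrightarrow> g \<in> VG \<Longrightarrow> h \<in> VH \<Longrightarrow> g' \<in> VG \<Longrightarrow> h' \<in> VH
   \<Longrightarrow> gdist EG g g' + gdist EH h h' \<le> n"
proof (induction n arbitrary: g h)
  case 0 then show ?case using G.d0 H.d0 by simp
next
  case (Suc n)
  then obtain q where q: "cart_edges EG EH (g,h) q" "walk_len (cart_edges EG EH) n q (g',h')" by auto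
  obtain a b where qab: "q = (a,b)" by (cases q)
  have "(a \<in> VG \<and> b \<in> VH)" using P.edgeV[OF q(1)] qab Suc.prems by auto
  then have IH: "gdist EG a g' + gdist EH b h' \<le> n" using Suc.IH q(2) qab Suc.prems by blast
  from q(1) qab have "(a = g \<and> EH h b) \<or> (b = h \<and> EG g a)" unfolding cart_edges_def by auto
  then show ?case
  proof
    assume c: "a = g \<and> EH h b"
    have "gdist EH h h' \<le> gdist EH h b + gdist EH b h'"
      using H.tri HedgeV[of h b] c Suc.prems by blast
    then show ?thesis using IH c H.dedge[of h b] by simp
  next
    assume c: "b = h \<and> EG g a"
    have "gdist EG g g' \<le> gdist EG g a + gdist EG a g'"
      using G.tri GedgeV[of g a] c Suc.prems by blast
    then show ?thesis using IH c G.dedge[of g a] by simp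
  qed
qed

lemma pdist:
  assumes "g \<in> VG" "h \<in> VH" "g' \<in> VG" "h' \<in> VH"
  shows "gdist (cart_edges EG EH) (g,h) (g',h') = gdist EG g g' + gdist EH h h'"
proof (rule antisym)
  show "gdist (cart_edges EG EH) (g,h) (g',h') \<le> gdist EG g g' + gdist EH h h'"
  proof -
    have "walk_len (cart_edges EG EH) (gdist EG g g') (g,h) (g',h)"
      using lift1[OF G.dwalk[OF assms(1,3)]] .
    moreover have "walk_len (cart_edges EG EH) (gdist EH h h') (g',h) (g',h')"
      using lift2[OF H.dwalk[OF assms(2,4)]] .
    ultimately show ?thesis using walk_append gdist_le by metis
  qed
  have "(g,h) \<in> VG \<times> VH" "(g',h') \<in> VG \<times> VH" using assms by auto
  from P.dwalk[OF this]
  show "gdist EG g g' + gdist EH h h' \<le> gdist (cart_edges EG EH) (g,h) (g',h')"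
    using pdist_ge assms by blast
qed

lemma md_prod:
  assumes a: "g \<in> VG" "h \<in> VH" "g' \<in> VG" "h' \<in> VH"
  shows "max_distant (cart_edges EG EH) (g,h) (g',h') \<longleftrightarrow> max_distant EG g g' \<and> max_distant EH h h'"
proof
  assume md: "max_distant (cart_edges EG EH) (g,h) (g',h')"
  have "gdist EG g' w \<le> gdist EG g g'" if w: "EG g w" for w
  proof -
    have "cart_edges EG EH (g,h) (w,h)" using w unfolding cart_edges_def by simp
    then have "gdist (cart_edges EG EH) (g',h') (w,h) \<le> gdist (cart_edges EG EH) (g,h) (g',h')"
      using md unfolding max_distant_def by blast
    moreover have "w \<in> VG" using GedgeV[OF w] by blast
    ultimately show ?thesis using pdist a H.dsym[of h' h] by simp
  qed
  moreover have "gdist EH h' w \<le> gdist EH h h'" if w: "EH h w" for w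
  proof -
    have "cart_edges EG EH (g,h) (g,w)" using w unfolding cart_edges_def by simp
    then have "gdist (cart_edges EG EH) (g',h') (g,w) \<le> gdist (cart_edges EG EH) (g,h) (g',h')"
      using md unfolding max_distant_def by blast
    moreover have "w \<in> VH" using HedgeV[OF w] by blast
    ultimately show ?thesis using pdist a G.dsym[of g' g] by simp
  qed
  ultimately show "max_distant EG g g' \<and> max_distant EH h h'" unfolding max_distant_def by blast
next
  assume md: "max_distant EG g g' \<and> max_distant EH h h'"
  show "max_distant (cart_edges EG EH) (g,h) (g',h')" unfolding max_distant_def
  proof (intro allI impI)
    fix q assume q: "cart_edges EG EH (g,h) q"
    obtain a b where qab: "q = (a,b)" by (cases q)
    have ab: "a \<in> VG" "b \<in> VH" using P.edgeV[OF q] qab a by auto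
    from q qab have "(a = g \<and> EH h b) \<or> (b = h \<and> EG g a)" unfolding cart_edges_def by auto
    then show "gdist (cart_edges EG EH) (g', h') q \<le> gdist (cart_edges EG EH) (g, h) (g', h')"
    proof
      assume c: "a = g \<and> EH h b"
      then have "gdist EH h' b \<le> gdist EH h h'" using md unfolding max_distant_def by blast
      then show ?thesis using c qab pdist a ab G.dsym[of g' g] by simp
    next
      assume c: "b = h \<and> EG g a"
      then have "gdist EG g' a \<le> gdist EG g g'" using md unfolding max_distant_def by blast
      then show ?thesis using c qab pdist a ab H.dsym[of h' h] by simp
    qed
  qed
qed

lemma mmd_prod:
  assumes cG: "card VG \<ge> 2" and cH: "card VH \<ge> 2"
  shows "mutually_max_distant (VG \<times> VH) (cart_edges EG EH) p q \<longleftrightarrow>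
     mutually_max_distant VG EG (fst p) (fst q) \<and> mutually_max_distant VH EH (snd p) (snd q)"
proof -
  obtain g h where p: "p = (g,h)" by (cases p)
  obtain g' h' where q: "q = (g',h')" by (cases q)
  show ?thesis
  proof (cases "g \<in> VG \<and> h \<in> VH \<and> g' \<in> VG \<and> h' \<in> VH")
    case True
    then have V: "g \<in> VG" "h \<in> VH" "g' \<in> VG" "h' \<in> VH" by auto
    have "g = g' \<Longrightarrow> \<not> max_distant EG g g'" using G.no_self_md[OF cG V(1)] by simp
    moreover have "h = h' \<Longrightarrow> \<not> max_distant EH h h'" using H.no_self_md[OF cH V(2)] by simp
    ultimately show ?thesis unfolding mutually_max_distant_def p q
      using md_prod[OF V] md_prod[OF V(3,4,1,2)] V by auto
  next
    case False
    then show ?thesis unfolding mutually_max_distant_def p q by auto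
  qed
qed

lemma boundary_prod:
  assumes cG: "card VG \<ge> 2" and cH: "card VH \<ge> 2"
  shows "boundary (VG \<times> VH) (cart_edges EG EH) = boundary VG EG \<times> boundary VH EH"
proof (intro set_eqI iffI)
  fix p assume "p \<in> boundary (VG \<times> VH) (cart_edges EG EH)"
  then obtain q where "mutually_max_distant (VG \<times> VH) (cart_edges EG EH) p q"
    unfolding boundary_def by blast
  then have "mutually_max_distant VG EG (fst p) (fst q)" "mutually_max_distant VH EH (snd p) (snd q)"
    using mmd_prod[OF cG cH, of p q] by auto
  then have "fst p \<in> boundary VG EG" "snd p \<in> boundary VH EH"
    using G.mmd_boundary H.mmd_boundary by blast+
  then show "p \<in> boundary VG EG \<times> boundary VH EH"
    by (simp add: mem_Times_iff)
next
  fix p assume "p \<in> boundary VG EG \<times> boundary VH EH"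
  then obtain g' h' where "mutually_max_distant VG EG (fst p) g'" "mutually_max_distant VH EH (snd p) h'"
    unfolding boundary_def mem_Times_iff by blast
  then have m: "mutually_max_distant (VG \<times> VH) (cart_edges EG EH) p (g',h')"
    using mmd_prod[OF cG cH, of p "(g',h')"] by simp
  then show "p \<in> boundary (VG \<times> VH) (cart_edges EG EH)"
    using P.mmd_boundary by blast
qed

end


lemma reg_count:
  assumes fin: "finite W" and RW: "\<And>x y. R x y \<Longrightarrow> x \<in> W \<and> y \<in> W"
    and deg: "\<And>x. x \<in> W \<Longrightarrow> card {y. R x y} = k" and A: "A \<subseteq> W"
  shows "card (Sigma A (\<lambda>x. {y. R x y})) = card A * k"
proof -
  have fA: "finite A" using fin A finite_subset by blast
  have "\<forall>a\<in>A. finite {y. R a y}"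
  proof
    fix a have "{y. R a y} \<subseteq> W" using RW by blast
    then show "finite {y. R a y}" using fin finite_subset by blast
  qed
  then have "card (Sigma A (\<lambda>x. {y. R x y})) = (\<Sum>a\<in>A. card {y. R a y})" using fA card_SigmaI[of A "\<lambda>x. {y. R x y}"] by blast
  also have "\<dots> = (\<Sum>a\<in>A. k)" using deg A by (intro sum.cong) auto
  finally show ?thesis by simp
qed

lemma reg_lower:
  assumes fin: "finite W" and RW: "\<And>x y. R x y \<Longrightarrow> x \<in> W \<and> y \<in> W"
    and sym: "\<And>x y. R x y \<Longrightarrow> R y x"
    and deg: "\<And>x. x \<in> W \<Longrightarrow> card {y. R x y} = k"
    and cov: "\<And>x y. R x y \<Longrightarrow> x \<in> C \<or> y \<in> C"
  shows "card W * k \<le> 2 * card (C \<inter> W) * k"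
proof -
  define N where "N = (\<lambda>x. {y. R x y})"
  have c1: "card (Sigma W N) = card W * k" unfolding N_def using reg_count[of W R k W] fin RW deg by blast
  have c2: "card (Sigma (C \<inter> W) N) = card (C \<inter> W) * k" unfolding N_def using reg_count[of W R k "C \<inter> W"] fin RW deg by blast
  have fS: "finite (Sigma (C \<inter> W) N)"
  proof -
    have "Sigma (C \<inter> W) N \<subseteq> W \<times> W" unfolding N_def using RW by auto
    then show ?thesis using fin finite_subset by blast
  qed
  have sub: "Sigma W N \<subseteq> Sigma (C \<inter> W) N \<union> prod.swap ` Sigma (C \<inter> W) N"
  proof
    fix p assume "p \<in> Sigma W N"
    then obtain x y where p: "p = (x,y)" "R x y" unfolding N_def by auto
    then have "x \<in> C \<or> y \<in> C" using cov by blast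
    then show "p \<in> Sigma (C \<inter> W) N \<union> prod.swap ` Sigma (C \<inter> W) N"
    proof
      assume "x \<in> C" then show ?thesis using p RW unfolding N_def by auto
    next
      assume "y \<in> C"
      then have "(y,x) \<in> Sigma (C \<inter> W) N" using p RW sym unfolding N_def by auto
      then have "prod.swap (y,x) \<in> prod.swap ` Sigma (C \<inter> W) N" by blast
      then show ?thesis using p by simp
    qed
  qed
  have "card (Sigma W N) \<le> card (Sigma (C \<inter> W) N \<union> prod.swap ` Sigma (C \<inter> W) N)"
    using sub fS by (intro card_mono) auto
  also have "\<dots> \<le> card (Sigma (C \<inter> W) N) + card (prod.swap ` Sigma (C \<inter> W) N)" by (rule card_Un_le)
  also have "\<dots> \<le> card (Sigma (C \<inter> W) N) + card (Sigma (C \<inter> W) N)" using card_image_le[OF fS] by simp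
  finally have "card W * k \<le> card (C \<inter> W) * k + card (C \<inter> W) * k" using c1 c2 by simp
  then show ?thesis by (metis add_mult_distrib mult_2)
qed

lemma reg_bip:
  assumes fin: "finite W" and RW: "\<And>x y. R x y \<Longrightarrow> x \<in> W \<and> y \<in> W"
    and sym: "\<And>x y. R x y \<Longrightarrow> R y x"
    and deg: "\<And>x. x \<in> W \<Longrightarrow> card {y. R x y} = k" and k: "k > 0"
    and AB: "A \<inter> B = {}" "A \<union> B = W"
    and cross: "\<forall>u\<in>W. \<forall>v\<in>W. R u v \<longrightarrow> (u \<in> A \<and> v \<in> B) \<or> (u \<in> B \<and> v \<in> A)"
  shows "card W = 2 * card A"
proof -
  define N where "N = (\<lambda>x. {y. R x y})"
  have A: "A \<subseteq> W" and B: "B \<subseteq> W" using AB by auto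
  have cA: "card (Sigma A N) = card A * k" unfolding N_def using reg_count[of W R k A] fin RW deg A by blast
  have cB: "card (Sigma B N) = card B * k" unfolding N_def using reg_count[of W R k B] fin RW deg B by blast
  have "Sigma A N = prod.swap ` Sigma B N"
  proof (intro set_eqI iffI)
    fix p assume "p \<in> Sigma A N"
    then obtain x y where p: "p = (x,y)" "R x y" "x \<in> A" unfolding N_def by auto
    then have "y \<in> B" using cross RW AB by blast
    then have "(y,x) \<in> Sigma B N" using p sym unfolding N_def by auto
    then show "p \<in> prod.swap ` Sigma B N" using p by force
  next
    fix p assume "p \<in> prod.swap ` Sigma B N"
    then obtain x y where p: "p = (x,y)" "R y x" "y \<in> B" unfolding N_def by auto
    then have "x \<in> A" using cross RW AB by blast
    then show "p \<in> Sigma A N" using p sym unfolding N_def by auto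
  qed
  then have "card (Sigma A N) = card (Sigma B N)" by (simp add: card_image)
  then have "card A = card B" using cA cB k by simp
  moreover have "card W = card A + card B" using AB fin card_Un_disjoint[of A B]
    by (metis finite_Un)
  ultimately show ?thesis by simp
qed



context cg begin
lemma nbr_eq: "{v \<in> boundary V E. mutually_max_distant V E u v} = {v. mutually_max_distant V E u v}"
  using mmd_boundary by blast

lemma reg_deg:
  assumes r: "SR_regular V E" and c: "card V \<ge> 2"
  shows "\<exists>k>0. \<forall>u\<in>boundary V E. card {v. mutually_max_distant V E u v} = k"
proof -
  obtain k where k: "\<forall>u\<in>boundary V E. card {v \<in> boundary V E. mutually_max_distant V E u v} = k"
    using r unfolding SR_regular_def regular_graph_def by blast
  then have k': "\<forall>u\<in>boundary V E. card {v. mutually_max_distant V E u v} = k" using nbr_eq by simp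
  obtain u where u: "u \<in> boundary V E" using boundary_ne[OF c] by blast
  then obtain v where v: "mutually_max_distant V E u v" unfolding boundary_def by blast
  have "{v. mutually_max_distant V E u v} \<subseteq> V" unfolding mutually_max_distant_def by blast
  then have "finite {v. mutually_max_distant V E u v}" using fin finite_subset by blast
  moreover have "v \<in> {v. mutually_max_distant V E u v}" using v by simp
  ultimately have "card {v. mutually_max_distant V E u v} > 0" using card_gt_0_iff by blast
  then show ?thesis using k' u by auto
qed

lemma bfin: "finite (boundary V E)" using fin unfolding boundary_def by simp
lemma bsub: "boundary V E \<subseteq> V" unfolding boundary_def by blast
end

context cg2 begin

lemma main:
  assumes cG: "card VG \<ge> 2" and cH: "card VH \<ge> 2"
    and rG: "SR_regular VG EG" and rH: "SR_regular VH EH"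
    and bip: "SR_bipartite VG EG \<or> SR_bipartite VH EH"
  shows "2 * strong_metric_dim (VG \<times> VH) (cart_edges EG EH) = card (boundary VG EG) * card (boundary VH EH)"
proof -
  let ?BG = "boundary VG EG" and ?BH = "boundary VH EH"
  let ?MG = "mutually_max_distant VG EG" and ?MH = "mutually_max_distant VH EH"
  let ?VP = "VG \<times> VH" and ?EP = "cart_edges EG EH"
  let ?MP = "mutually_max_distant ?VP ?EP"
  let ?W = "?BG \<times> ?BH"
  obtain kG where kG: "kG > 0" "\<forall>u\<in>?BG. card {v. ?MG u v} = kG" using G.reg_deg[OF rG cG] by blast
  obtain kH where kH: "kH > 0" "\<forall>u\<in>?BH. card {v. ?MH u v} = kH" using H.reg_deg[OF rH cH] by blast
  have MP: "?MP p q \<longleftrightarrow> ?MG (fst p) (fst q) \<and> ?MH (snd p) (snd q)" for p q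
    using mmd_prod[OF cG cH] .
  have finW: "finite ?W" using G.bfin H.bfin by simp
  have RW: "?MP x y \<Longrightarrow> x \<in> ?W \<and> y \<in> ?W" for x y
    using P.mmd_boundary boundary_prod[OF cG cH] by blast
  have Rsym: "?MP x y \<Longrightarrow> ?MP y x" for x y using P.mmd_sym by blast
  have deg: "card {q. ?MP p q} = kG * kH" if p: "p \<in> ?W" for p
  proof -
    have "{q. ?MP p q} = {g'. ?MG (fst p) g'} \<times> {h'. ?MH (snd p) h'}" using MP by auto
    moreover have "fst p \<in> ?BG" "snd p \<in> ?BH" using p by auto
    ultimately show ?thesis using kG kH by (simp add: card_cartesian_product)
  qed
  have kpos: "kG * kH > 0" using kG kH by simp
  have lower: "card ?W \<le> 2 * card S" if S: "strong_resolving_set ?VP ?EP S" for S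
  proof -
    have cov: "?MP x y \<Longrightarrow> x \<in> S \<or> y \<in> S" for x y using P.srs_cover[OF S] by blast
    have "card ?W * (kG * kH) \<le> 2 * card (S \<inter> ?W) * (kG * kH)"
      using reg_lower[of ?W ?MP "kG * kH" S] finW RW Rsym deg cov by blast
    then have "card ?W \<le> 2 * card (S \<inter> ?W)" using kpos by simp
    moreover have "card (S \<inter> ?W) \<le> card S"
    proof -
      have "S \<subseteq> ?VP" using S unfolding strong_resolving_set_def by blast
      then have "finite S" using P.fin finite_subset by blast
      then show ?thesis by (simp add: card_mono)
    qed
    ultimately show ?thesis by simp
  qed
  obtain C where C: "strong_resolving_set ?VP ?EP C" "2 * card C = card ?W"
  proof (cases "SR_bipartite VH EH")
    case True
    then obtain X Y where XY: "X \<inter> Y = {}" "X \<union> Y = ?BH"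
      "\<forall>u\<in>?BH. \<forall>v\<in>?BH. ?MH u v \<longrightarrow> (u \<in> X \<and> v \<in> Y) \<or> (u \<in> Y \<and> v \<in> X)"
      unfolding SR_bipartite_def bipartite_graph_def by blast
    have cX: "card ?BH = 2 * card X"
      using reg_bip[of ?BH ?MH kH X Y] H.bfin H.mmd_boundary H.mmd_sym kH XY by blast
    define C where "C = ?BG \<times> X"
    have "C \<subseteq> ?VP" unfolding C_def using G.bsub H.bsub XY by blast
    moreover have "?MP x y \<Longrightarrow> x \<in> C \<or> y \<in> C" for x y
    proof -
      assume m: "?MP x y"
      then have "?MH (snd x) (snd y)" "fst x \<in> ?BG" "fst y \<in> ?BG" using MP G.mmd_boundary by blast+
      moreover have "snd x \<in> ?BH" "snd y \<in> ?BH" using H.mmd_boundary calculation(1) by blast+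
      ultimately show ?thesis using XY(3) unfolding C_def by (auto simp: mem_Times_iff)
    qed
    ultimately have "strong_resolving_set ?VP ?EP C" using P.cover_srs by blast
    moreover have "2 * card C = card ?W" unfolding C_def using cX by (simp add: card_cartesian_product)
    ultimately show ?thesis using that by blast
  next
    case False
    then have "SR_bipartite VG EG" using bip by blast
    then obtain X Y where XY: "X \<inter> Y = {}" "X \<union> Y = ?BG"
      "\<forall>u\<in>?BG. \<forall>v\<in>?BG. ?MG u v \<longrightarrow> (u \<in> X \<and> v \<in> Y) \<or> (u \<in> Y \<and> v \<in> X)"
      unfolding SR_bipartite_def bipartite_graph_def by blast
    have cX: "card ?BG = 2 * card X"
      using reg_bip[of ?BG ?MG kG X Y] G.bfin G.mmd_boundary G.mmd_sym kG XY by blast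
    define C where "C = X \<times> ?BH"
    have "C \<subseteq> ?VP" unfolding C_def using G.bsub H.bsub XY by blast
    moreover have "?MP x y \<Longrightarrow> x \<in> C \<or> y \<in> C" for x y
    proof -
      assume m: "?MP x y"
      then have "?MG (fst x) (fst y)" "snd x \<in> ?BH" "snd y \<in> ?BH" using MP H.mmd_boundary by blast+
      moreover have "fst x \<in> ?BG" "fst y \<in> ?BG" using G.mmd_boundary calculation(1) by blast+
      ultimately show ?thesis using XY(3) unfolding C_def by (auto simp: mem_Times_iff)
    qed
    ultimately have "strong_resolving_set ?VP ?EP C" using P.cover_srs by blast
    moreover have "2 * card C = card ?W" unfolding C_def using cX by (simp add: card_cartesian_product)
    ultimately show ?thesis using that by blast
  qed
  have "strong_metric_dim ?VP ?EP = card C"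
    unfolding strong_metric_dim_def
  proof (rule Least_equality)
    show "\<exists>S. strong_resolving_set ?VP ?EP S \<and> card S = card C" using C by blast
    fix k assume "\<exists>S. strong_resolving_set ?VP ?EP S \<and> card S = k"
    then obtain S where "strong_resolving_set ?VP ?EP S" "card S = k" by blast
    then show "card C \<le> k" using lower C(2) by fastforce
  qed
  then show ?thesis using C(2) by (simp add: card_cartesian_product)
qed
end

theorem theorem10:
  fixes VG :: "'a set" and EG :: "'a \<Rightarrow> 'a \<Rightarrow> bool"
    and VH :: "'b set" and EH :: "'b \<Rightarrow> 'b \<Rightarrow> bool"
  assumes "connected_graph VG EG" and "connected_graph VH EH"
    and "card VG \<ge> 2" and "card VH \<ge> 2"
    and "SR_regular VG EG" and "SR_regular VH EH"
    and "SR_bipartite VG EG \<or> SR_bipartite VH EH"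
  shows "real (strong_metric_dim (VG \<times> VH) (cart_edges EG EH))
           = real (card (boundary VG EG)) * real (card (boundary VH EH)) / 2"
proof -
  interpret cg2 VG EG VH EH using assms(1,2) by (rule cg2.intro)
  have "2 * strong_metric_dim (VG \<times> VH) (cart_edges EG EH) = card (boundary VG EG) * card (boundary VH EH)"
    using main assms(3-7) by blast
  then have "real (2 * strong_metric_dim (VG \<times> VH) (cart_edges EG EH)) = real (card (boundary VG EG) * card (boundary VH EH))"
    by simp
  then show ?thesis by simp
qed


end
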